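(* Let $q\in\mathbb{N}$ be odd, $\alpha_2\in\mathbb{Z}$ with $\gcd(\alpha_2,q)=1$, and $N\in\mathbb{N}$ with $N<q/2$. Then for every $\varepsilon>0$, $$\sum_{\chi\bmod q}\Bigg|\sum_{|x_1|,|x_2|\le N}\chi(x_1^2+\alpha_2x_2^2)\Bigg|^2\ll_\varepsilon qN^{2+\varepsilon}\left(1+\frac{N^2}{q}\right),$$ where the outer sum runs over all Dirichlet characters modulo $q$ and the inner sum over integers $x_1,x_2$. *)

theory Defs
  imports Complex_Main
begin

definition dirichlet_char :: "int \<Rightarrow> (int \<Rightarrow> complex) \<Rightarrow> bool" where
  "dirichlet_char q \<chi> \<longleftrightarrow>
     (\<forall>n. \<chi> (n + q) = \<chi> n) \<and>
     (\<forall>m n. \<chi> (m * n) = \<chi> m * \<chi> n) \<and>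
     \<chi> 1 = 1 \<and>
     (\<forall>n. \<chi> n = 0 \<longleftrightarrow> \<not> coprime n q)"

end

theory Submission
  imports Defs "HOL-Number_Theory.Number_Theory"
begin


lemma divisors_prime_power_mult:
  fixes p m k :: nat
  assumes p: "prime p" and nd: "\<not> p dvd m" and m: "m > 0"
  shows "card {d. d dvd p^k * m} \<le> (k+1) * card {e. e dvd m}"
proof -
  have sub: "{d. d dvd p^k * m} \<subseteq> (\<lambda>(i,e). p^i * e) ` ({0..k} \<times> {e. e dvd m})"
  proof
    fix d assume "d \<in> {d. d dvd p^k * m}"
    hence dd: "d dvd p^k * m" by simp
    define i where "i = multiplicity p d"
    obtain e where de: "d = p^i * e" and npe: "\<not> p dvd e"
    proof -
      have "d \<noteq> 0" using dd m p by (metis dvd_0_left_iff mult_is_0 power_eq_0_iff prime_gt_0_nat not_gr0)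
      moreover have "\<not> is_unit p" using p by (metis not_prime_unit)
      ultimately show ?thesis using multiplicity_decompose'[of d p] i_def that by metis
    qed
    have cop: "coprime e (p^k)" using npe p
      by (metis coprime_commute coprime_power_right_iff prime_imp_coprime)
    have "e dvd p^k * m" using dd de by (metis dvd_mult_right mult.commute)
    hence em: "e dvd m" using cop coprime_dvd_mult_right_iff by blast
    have cop2: "coprime (p^i) m" using nd p
      by (metis coprime_power_left_iff prime_imp_coprime)
    have "p^i dvd p^k * m" using dd de by (metis dvd_mult_left)
    hence "p^i dvd p^k" using cop2 coprime_dvd_mult_left_iff by blast
    hence "i \<le> k" using p power_dvd_imp_le prime_gt_1_nat by blast
    thus "d \<in> (\<lambda>(i,e). p^i * e) ` ({0..k} \<times> {e. e dvd m})"
      using de em by force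
  qed
  have fin: "finite {e. e dvd m}" using m by simp
  have "card {d. d dvd p^k * m} \<le> card ((\<lambda>(i,e). p^i * e) ` ({0..k} \<times> {e. e dvd m}))"
    by (rule card_mono) (use fin sub in auto)
  also have "\<dots> \<le> card ({0..k} \<times> {e. e dvd m})" by (rule card_image_le) (use fin in auto)
  also have "\<dots> = (k+1) * card {e. e dvd m}" by (simp add: card_cartesian_product)
  finally show ?thesis .
qed

lemma lin_le_exp_bound:
  fixes \<delta> :: real assumes d: "\<delta> > 0"
  shows "real (k+1) \<le> (1 + 1/(\<delta> * ln 2)) * 2 powr (real k * \<delta>)"
proof -
  define c where "c = \<delta> * ln 2"
  have c: "c > 0" using d by (simp add: c_def)
  have "2 powr (real k * \<delta>) = exp (real k * c)" by (simp add: powr_def c_def mult_ac)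
  also have "\<dots> \<ge> 1 + real k * c" by simp
  finally have e: "1 + real k * c \<le> 2 powr (real k * \<delta>)" .
  have "real (k+1) \<le> (1 + 1/c) * (1 + real k * c)"
    using c by (simp add: field_simps)
  also have "\<dots> \<le> (1 + 1/c) * 2 powr (real k * \<delta>)"
    using e c by (intro mult_left_mono) auto
  finally show ?thesis by (simp add: c_def)
qed

lemma divisor_bound_aux:
  fixes \<delta> :: real assumes d: "\<delta> > 0"
  shows "n > 0 \<Longrightarrow> real (card {d. d dvd n}) \<le>
     (1 + 1/(\<delta> * ln 2)) ^ card {p. prime p \<and> p < nat \<lceil>2 powr (1/\<delta>)\<rceil> \<and> p dvd n} * real n powr \<delta>"
proof (induction n rule: less_induct)
  case (less n)
  define K where "K = 1 + 1/(\<delta> * ln 2)"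
  define P where "P = nat \<lceil>2 powr (1/\<delta>)\<rceil>"
  define S where "S = (\<lambda>n. {p. prime p \<and> p < P \<and> p dvd n})"
  have K1: "K \<ge> 1" using d by (simp add: K_def)
  show ?case
  proof (cases "n = 1")
    case True
    have "{p. prime p \<and> p < nat \<lceil>2 powr (1/\<delta>)\<rceil> \<and> p dvd n} = {}" (is "?A = {}") using True by auto
    have c1: "card {d. d dvd n} = 1" using True by simp
    show ?thesis unfolding c1 \<open>?A = {}\<close> using True by simp
  next
    case False
    then obtain p where p: "prime p" "p dvd n" using prime_factor_nat by blast
    define k where "k = multiplicity p n"
    obtain m where nm: "n = p^k * m" and npm: "\<not> p dvd m"
      using multiplicity_decompose'[of n p] k_def less.prems p by (metis not_prime_unit not_gr0)
    have k1: "k \<ge> 1" using p less.prems multiplicity_gt_zero_iff[of n p] by (simp add: k_def Suc_le_eq) (metis One_nat_def not_prime_1)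
    have m0: "m > 0" using nm less.prems by (metis gr0I mult_0_right)
    have p2: "p \<ge> 2" using p prime_ge_2_nat by blast
    have "p ^ 1 \<le> p ^ k" using k1 p2 by (intro power_increasing) auto
    hence pk: "p^k \<ge> 2" using p2 by simp
    have "m * 1 < m * p^k" using m0 pk by (intro mult_strict_left_mono) auto
    hence mn: "m < n" using nm by (simp add: mult.commute)
    have IH: "real (card {d. d dvd m}) \<le> K ^ card (S m) * real m powr \<delta>"
      using less.IH[OF mn m0] by (simp add: K_def S_def P_def)
    have finS: "finite (S n)" unfolding S_def by (rule finite_subset[of _ "{..<P}"]) auto
    have Ssub: "S m \<subseteq> S n" unfolding S_def using nm by auto
    have npow: "real n powr \<delta> = real p powr (real k * \<delta>) * real m powr \<delta>"
      using nm p2 by (simp add: powr_mult powr_realpow[symmetric] powr_powr mult_ac)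
    have cd: "real (card {d. d dvd n}) \<le> real (k+1) * real (card {d. d dvd m})"
      using divisors_prime_power_mult[OF p(1) npm m0, of k] nm by (metis of_nat_le_iff of_nat_mult)
    have mpos: "real m powr \<delta> \<ge> 0" by simp
    show ?thesis
    proof (cases "p < P")
      case True
      have "p \<notin> S m" using npm by (simp add: S_def)
      moreover have "p \<in> S n" using True p by (simp add: S_def)
      ultimately have "insert p (S m) \<subseteq> S n" using Ssub by auto
      hence "card (insert p (S m)) \<le> card (S n)" using finS card_mono by blast
      hence cS: "card (S m) + 1 \<le> card (S n)" using \<open>p \<notin> S m\<close> finS Ssub
        by (metis Suc_eq_plus1 card_insert_disjoint finite_subset)
      have "real (k+1) \<le> K * 2 powr (real k * \<delta>)" using lin_le_exp_bound[OF d] by (simp add: K_def)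
      also have "\<dots> \<le> K * real p powr (real k * \<delta>)"
        using K1 p2 d by (intro mult_left_mono powr_mono2) auto
      finally have kb: "real (k+1) \<le> K * real p powr (real k * \<delta>)" .
      have "real (card {d. d dvd n}) \<le> (K * real p powr (real k * \<delta>)) * (K ^ card (S m) * real m powr \<delta>)"
        using cd kb IH by (meson mult_mono of_nat_0_le_iff order_trans)
      also have "\<dots> = K ^ (card (S m) + 1) * real n powr \<delta>" by (simp add: npow mult_ac)
      also have "\<dots> \<le> K ^ card (S n) * real n powr \<delta>"
        using cS K1 by (intro mult_right_mono power_increasing) auto
      finally show ?thesis by (simp add: K_def S_def P_def)
    next
      case False
      have "2 powr (1/\<delta>) \<le> real p" using False unfolding P_def by linarith
      hence "(2 powr (1/\<delta>)) powr \<delta> \<le> real p powr \<delta>" using d by (intro powr_mono2) auto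
      hence pd: "2 \<le> real p powr \<delta>" using d by (simp add: powr_powr)
      have "real (k+1) \<le> 2 ^ k" by (induction k) auto
      also have "\<dots> \<le> (real p powr \<delta>) ^ k" using pd by (intro power_mono) auto
      also have "\<dots> = real p powr (real k * \<delta>)" using p2 by (simp add: powr_realpow[symmetric] powr_powr mult_ac)
      finally have kb: "real (k+1) \<le> real p powr (real k * \<delta>)" .
      have "real (card {d. d dvd n}) \<le> real p powr (real k * \<delta>) * (K ^ card (S m) * real m powr \<delta>)"
        using cd kb IH by (meson mult_mono of_nat_0_le_iff order_trans powr_ge_zero)
      also have "\<dots> = K ^ card (S m) * real n powr \<delta>" by (simp add: npow mult_ac)
      also have "\<dots> \<le> K ^ card (S n) * real n powr \<delta>"
        using Ssub finS K1 by (intro mult_right_mono power_increasing card_mono) auto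
      finally show ?thesis by (simp add: K_def S_def P_def)
    qed
  qed
qed

lemma divisor_bound:
  fixes \<delta> :: real assumes d: "\<delta> > 0"
  shows "\<exists>K>0. \<forall>n::nat. n > 0 \<longrightarrow> real (card {d. d dvd n}) \<le> K * real n powr \<delta>"
proof -
  define K where "K = 1 + 1/(\<delta> * ln 2)"
  define P where "P = nat \<lceil>2 powr (1/\<delta>)\<rceil>"
  have K1: "K \<ge> 1" using d by (simp add: K_def)
  have "\<forall>n::nat. n > 0 \<longrightarrow> real (card {d. d dvd n}) \<le> K ^ P * real n powr \<delta>"
  proof (intro allI impI)
    fix n :: nat assume n: "n > 0"
    have "card {p. prime p \<and> p < P \<and> p dvd n} \<le> card {..<P}" by (intro card_mono) auto
    hence "K ^ card {p. prime p \<and> p < P \<and> p dvd n} \<le> K ^ P" using K1 by (intro power_increasing) auto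
    thus "real (card {d. d dvd n}) \<le> K ^ P * real n powr \<delta>"
      using divisor_bound_aux[OF d n] by (simp add: K_def P_def) (meson mult_right_mono order_trans powr_ge_zero)
  qed
  moreover have "K ^ P > 0" using K1 by simp
  ultimately show ?thesis by blast
qed


lemma int_divisors_card:
  fixes m :: int assumes "m \<noteq> 0"
  shows "card {u::int. u dvd m} \<le> 2 * card {d::nat. d dvd nat \<bar>m\<bar>}"
proof -
  define Dn where "Dn = {d::nat. d dvd nat \<bar>m\<bar>}"
  have finDn: "finite Dn" unfolding Dn_def
    by (rule finite_subset[of _ "{..nat \<bar>m\<bar>}"]) (use assms in \<open>auto intro: dvd_imp_le\<close>)
  have "{u::int. u dvd m} \<subseteq> int ` Dn \<union> (\<lambda>d. - int d) ` Dn"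
  proof
    fix u assume "u \<in> {u::int. u dvd m}"
    hence u: "u dvd m" by simp
    have "nat \<bar>u\<bar> dvd nat \<bar>m\<bar>" using u by simp
    hence "nat \<bar>u\<bar> \<in> Dn" unfolding Dn_def by simp
    show "u \<in> int ` Dn \<union> (\<lambda>d. - int d) ` Dn"
    proof (cases "u \<ge> 0")
      case True
      hence "u = int (nat \<bar>u\<bar>)" by simp
      thus ?thesis using \<open>nat \<bar>u\<bar> \<in> Dn\<close> by blast
    next
      case False
      hence "u = - int (nat \<bar>u\<bar>)" by simp
      thus ?thesis using \<open>nat \<bar>u\<bar> \<in> Dn\<close> by blast
    qed
  qed
  hence "card {u::int. u dvd m} \<le> card (int ` Dn \<union> (\<lambda>d. - int d) ` Dn)"
    using finDn by (intro card_mono) auto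
  also have "\<dots> \<le> card (int ` Dn) + card ((\<lambda>d. - int d) ` Dn)" by (rule card_Un_le)
  also have "\<dots> \<le> card Dn + card Dn" by (intro add_mono card_image_le finDn)
  finally show ?thesis by (simp add: Dn_def)
qed

lemma reps_card:
  fixes m :: int and B :: "int set" assumes "m \<noteq> 0"
  shows "card {(x,y). x \<in> B \<and> y \<in> B \<and> x^2 - y^2 = m} \<le> 2 * card {d::nat. d dvd nat \<bar>m\<bar>}"
proof -
  let ?A = "{(x,y). x \<in> B \<and> y \<in> B \<and> x^2 - y^2 = m}"
  have fact: "x^2 - y^2 = (x - y) * (x + y)" for x y :: int by (simp add: power2_eq_square algebra_simps)
  have key: "x = x' \<and> y = y'" if h: "x^2 - y^2 = m" "x'^2 - y'^2 = m" "x - y = x' - y'" for x y x' y' :: int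
  proof -
    have "(x - y) * (x + y) = (x - y) * (x' + y')" using h fact by metis
    moreover have "x - y \<noteq> 0" using h(1) assms fact by auto
    ultimately have "x + y = x' + y'" by simp
    with h(3) show "x = x' \<and> y = y'" by linarith
  qed
  have "inj_on (\<lambda>(x,y). x - y) ?A"
  proof (rule inj_onI)
    fix a b assume a: "a \<in> ?A" and b: "b \<in> ?A" and e: "(\<lambda>(x,y). x - y) a = (\<lambda>(x,y). x - y) b"
    show "a = b" using key[of "fst a" "snd a" "fst b" "snd b"] a b e by (auto simp: case_prod_beta prod_eq_iff)
  qed
  moreover have "(\<lambda>(x,y). x - y) ` ?A \<subseteq> {u. u dvd m}" using fact by auto
  moreover have "finite {u::int. u dvd m}" using assms by simp
  ultimately have "card ?A \<le> card {u::int. u dvd m}" by (rule card_inj_on_le)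
  also have "\<dots> \<le> 2 * card {d::nat. d dvd nat \<bar>m\<bar>}" by (rule int_divisors_card[OF assms])
  finally show ?thesis .
qed

lemma div_real_bounds:
  fixes a b :: int assumes b: "b > 0"
  shows "real_of_int (a div b) \<le> a / b" "real_of_int (a div b) > a / b - 1"
proof -
  have e: "a = b * (a div b) + a mod b" by simp
  have m: "0 \<le> a mod b" "a mod b < b" using b by auto
  have e': "real_of_int a = real_of_int b * real_of_int (a div b) + real_of_int (a mod b)"
    using e by (metis of_int_add of_int_mult)
  have m': "0 \<le> real_of_int (a mod b)" "real_of_int (a mod b) < real_of_int b" using m by simp_all
  have bp: "real_of_int b > 0" using b by simp
  show "real_of_int (a div b) \<le> a / b" using e' m' bp by (simp add: field_simps)
  show "real_of_int (a div b) > a / b - 1" using e' m' bp by (simp add: field_simps)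
qed

lemma residue_class_card:
  fixes n Q h :: int assumes Q: "Q > 0" and n: "n \<ge> 0"
  shows "real (card {m \<in> {-(n^2)..n^2}. m mod Q = h mod Q}) \<le> 2 * n^2 / Q + 2"
proof -
  define M where "M = {m \<in> {-(n^2)..n^2}. m mod Q = h mod Q}"
  have "inj_on (\<lambda>m. m div Q) M"
  proof (rule inj_onI)
    fix a b assume "a \<in> M" "b \<in> M" "a div Q = b div Q"
    hence "a mod Q = b mod Q" "a div Q = b div Q" by (auto simp: M_def)
    thus "a = b" by (metis mult_div_mod_eq)
  qed
  moreover have "(\<lambda>m. m div Q) ` M \<subseteq> {(-(n^2)) div Q .. n^2 div Q}"
    using Q by (auto simp: M_def intro: zdiv_mono1)
  ultimately have "card M \<le> card {(-(n^2)) div Q .. n^2 div Q}"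
    by (intro card_inj_on_le) auto
  moreover have "(-(n^2)) div Q \<le> n^2 div Q" by (intro zdiv_mono1) (use Q in auto)
  ultimately have "real (card M) \<le> real_of_int (n^2 div Q - (-(n^2)) div Q + 1)"
    by simp
  also have "\<dots> \<le> n^2/Q - (-(n^2))/Q + 2"
    using div_real_bounds[OF Q, of "n^2"] div_real_bounds[OF Q, of "-(n^2)"] by simp
  also have "\<dots> = 2 * n^2 / Q + 2" by (simp add: field_simps)
  finally show ?thesis by (simp add: M_def)
qed

lemma sq_diff_bound:
  fixes x y n :: int assumes "\<bar>x\<bar> \<le> n" "\<bar>y\<bar> \<le> n"
  shows "\<bar>x^2 - y^2\<bar> \<le> n^2"
proof -
  have "\<bar>x\<bar>^2 \<le> n^2" "\<bar>y\<bar>^2 \<le> n^2"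
    using power_mono[OF assms(1) abs_ge_zero, of 2] power_mono[OF assms(2) abs_ge_zero, of 2] by auto
  hence "x^2 \<le> n^2" "y^2 \<le> n^2" by simp_all
  moreover have "x^2 \<ge> 0" "y^2 \<ge> 0" by simp_all
  ultimately show ?thesis by linarith
qed

lemma count_L:
  fixes n Q h :: int and R :: real
  assumes Q: "Q > 0" and n: "n \<ge> 0" and R0: "R \<ge> 0"
    and R: "\<And>m. m \<noteq> 0 \<Longrightarrow> \<bar>m\<bar> \<le> n^2 \<Longrightarrow>
        real (card {(x,y). x \<in> {-n..n} \<and> y \<in> {-n..n} \<and> x^2 - y^2 = m}) \<le> R"
  shows "real (card {(x,y). x \<in> {-n..n} \<and> y \<in> {-n..n} \<and> (x^2 - y^2) mod Q = h mod Q \<and> x^2 - y^2 \<noteq> 0})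
          \<le> (2 * n^2 / Q + 2) * R"
proof -
  define B where "B = {-n..n}"
  define M where "M = {m \<in> {-(n^2)..n^2}. m mod Q = h mod Q}"
  define A where "A = (\<lambda>m. {(x,y). x \<in> B \<and> y \<in> B \<and> x^2 - y^2 = m})"
  let ?S = "{(x,y). x \<in> B \<and> y \<in> B \<and> (x^2 - y^2) mod Q = h mod Q \<and> x^2 - y^2 \<noteq> 0}"
  have finM: "finite M" unfolding M_def by (rule finite_subset[of _ "{-(n^2)..n^2}"]) auto
  have finA: "finite (A m)" for m
    by (rule finite_subset[of _ "B \<times> B"]) (auto simp: A_def B_def)
  have "?S \<subseteq> (\<Union>m\<in>{m\<in>M. m \<noteq> 0}. A m)"
  proof
    fix p assume "p \<in> ?S"
    then obtain x y where p: "p = (x,y)" "x \<in> B" "y \<in> B" "(x^2 - y^2) mod Q = h mod Q" "x^2 - y^2 \<noteq> 0" by auto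
    have "\<bar>x^2 - y^2\<bar> \<le> n^2" using p by (intro sq_diff_bound) (auto simp: B_def)
    hence "x^2 - y^2 \<in> {m\<in>M. m \<noteq> 0}" using p by (auto simp: M_def)
    thus "p \<in> (\<Union>m\<in>{m\<in>M. m \<noteq> 0}. A m)" using p by (auto simp: A_def)
  qed
  hence "card ?S \<le> card (\<Union>m\<in>{m\<in>M. m \<noteq> 0}. A m)"
    using finM finA by (intro card_mono) auto
  also have "\<dots> \<le> (\<Sum>m\<in>{m\<in>M. m \<noteq> 0}. card (A m))" using finM by (intro card_UN_le) auto
  finally have "real (card ?S) \<le> real (\<Sum>m\<in>{m\<in>M. m \<noteq> 0}. card (A m))"
    by (rule of_nat_mono)
  also have "\<dots> = (\<Sum>m\<in>{m\<in>M. m \<noteq> 0}. real (card (A m)))" by (rule of_nat_sum)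
  also have "\<dots> \<le> real (card {m\<in>M. m \<noteq> 0}) * R"
  proof (rule sum_bounded_above)
    fix m assume "m \<in> {m\<in>M. m \<noteq> 0}"
    thus "real (card (A m)) \<le> R" using R[of m] by (auto simp: M_def A_def B_def)
  qed
  also have "\<dots> \<le> real (card M) * R" using finM R0 by (intro mult_right_mono) (auto intro: card_mono)
  also have "\<dots> \<le> (2 * n^2 / Q + 2) * R"
    using residue_class_card[OF Q n, of h] R0 by (intro mult_right_mono) (auto simp: M_def)
  finally show ?thesis by (simp add: B_def)
qed


lemma bessel_chars:
  fixes G :: "('a \<Rightarrow> complex) set" and R :: "'a set" and c :: "'a \<Rightarrow> real" and P :: real
  assumes finG: "finite G" and finR: "finite R" and P: "P > 0"
    and orth: "\<And>\<chi> \<psi>. \<chi> \<in> G \<Longrightarrow> \<psi> \<in> G \<Longrightarrow>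
               (\<Sum>r\<in>R. \<chi> r * cnj (\<psi> r)) = (if \<chi> = \<psi> then complex_of_real P else 0)"
  shows "(\<Sum>\<chi>\<in>G. (cmod (\<Sum>r\<in>R. complex_of_real (c r) * \<chi> r))^2) \<le> P * (\<Sum>r\<in>R. (c r)^2)"
proof -
  define cc where "cc = (\<lambda>r. complex_of_real (c r))"
  define a where "a = (\<lambda>\<chi>. \<Sum>r\<in>R. cc r * cnj (\<chi> r))"
  define b where "b = (\<lambda>\<chi>. a \<chi> / complex_of_real P)"
  define V where "V = (\<lambda>r. \<Sum>\<chi>\<in>G. b \<chi> * \<chi> r)"
  define A where "A = (\<Sum>\<chi>\<in>G. (cmod (a \<chi>))^2)"
  have cnjcc: "cnj (cc r) = cc r" for r by (simp add: cc_def)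
  have absa: "cmod (\<Sum>r\<in>R. cc r * \<chi> r) = cmod (a \<chi>)" for \<chi>
  proof -
    have "cnj (\<Sum>r\<in>R. cc r * \<chi> r) = a \<chi>" by (simp add: a_def cnjcc)
    thus ?thesis by (metis complex_mod_cnj)
  qed
  have aa: "a \<chi> * cnj (a \<chi>) = complex_of_real ((cmod (a \<chi>))^2)" for \<chi>
    by (rule complex_norm_square[symmetric])
  have S1: "(\<Sum>r\<in>R. cc r * cnj (V r)) = complex_of_real A / complex_of_real P"
  proof -
    have "(\<Sum>r\<in>R. cc r * cnj (V r)) = (\<Sum>r\<in>R. \<Sum>\<chi>\<in>G. cnj (b \<chi>) * (cc r * cnj (\<chi> r)))"
      by (simp add: V_def sum_distrib_left mult_ac)
    also have "\<dots> = (\<Sum>\<chi>\<in>G. cnj (b \<chi>) * a \<chi>)"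
      by (subst sum.swap) (simp add: a_def sum_distrib_left)
    also have "\<dots> = (\<Sum>\<chi>\<in>G. complex_of_real ((cmod (a \<chi>))^2) / complex_of_real P)"
    proof (intro sum.cong refl)
      fix \<chi> assume "\<chi> \<in> G"
      have "cnj (b \<chi>) * a \<chi> = (a \<chi> * cnj (a \<chi>)) / complex_of_real P" by (simp add: b_def mult.commute)
      thus "cnj (b \<chi>) * a \<chi> = complex_of_real ((cmod (a \<chi>))^2) / complex_of_real P" by (simp only: aa)
    qed
    finally show ?thesis by (simp add: A_def sum_divide_distrib)
  qed
  have S2: "(\<Sum>r\<in>R. V r * cc r) = complex_of_real A / complex_of_real P"
  proof -
    have "(\<Sum>r\<in>R. V r * cc r) = cnj (\<Sum>r\<in>R. cc r * cnj (V r))"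
      by (simp add: cnjcc mult_ac)
    also have "\<dots> = complex_of_real A / complex_of_real P" by (simp add: S1)
    finally show ?thesis .
  qed
  have S3: "(\<Sum>r\<in>R. V r * cnj (V r)) = complex_of_real A / complex_of_real P"
  proof -
    have "(\<Sum>r\<in>R. V r * cnj (V r)) = (\<Sum>r\<in>R. \<Sum>\<psi>\<in>G. \<Sum>\<chi>\<in>G. b \<chi> * cnj (b \<psi>) * (\<chi> r * cnj (\<psi> r)))"
      by (simp add: V_def sum_distrib_left sum_distrib_right mult_ac)
    also have "\<dots> = (\<Sum>\<psi>\<in>G. \<Sum>\<chi>\<in>G. b \<chi> * cnj (b \<psi>) * (\<Sum>r\<in>R. \<chi> r * cnj (\<psi> r)))"
      by (subst sum.swap) (simp add: sum.swap[of _ R] sum_distrib_left)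
    also have "\<dots> = (\<Sum>\<psi>\<in>G. \<Sum>\<chi>\<in>G. b \<chi> * cnj (b \<psi>) * (if \<chi> = \<psi> then complex_of_real P else 0))"
      by (intro sum.cong refl) (simp add: orth)
    also have "\<dots> = (\<Sum>\<psi>\<in>G. b \<psi> * cnj (b \<psi>) * complex_of_real P)"
      by (intro sum.cong refl) (simp add: if_distrib finG cong: if_cong)
    also have "\<dots> = (\<Sum>\<chi>\<in>G. complex_of_real ((cmod (a \<chi>))^2) / complex_of_real P)"
    proof (intro sum.cong refl)
      fix \<chi> assume "\<chi> \<in> G"
      have  "b \<chi> * cnj (b \<chi>) * complex_of_real P = (a \<chi> * cnj (a \<chi>)) / complex_of_real P"
        using P by (simp add: b_def field_simps power2_eq_square)
      thus "b \<chi> * cnj (b \<chi>) * complex_of_real P = complex_of_real ((cmod (a \<chi>))^2) / complex_of_real P" by (simp only: aa)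
    qed
    finally show ?thesis by (simp add: A_def sum_divide_distrib)
  qed
  have E: "(\<Sum>r\<in>R. (cc r - V r) * cnj (cc r - V r))
        = complex_of_real (\<Sum>r\<in>R. (c r)^2) - complex_of_real A / complex_of_real P"
  proof -
    have "(\<Sum>r\<in>R. (cc r - V r) * cnj (cc r - V r))
        = (\<Sum>r\<in>R. cc r * cc r) - (\<Sum>r\<in>R. cc r * cnj (V r)) - (\<Sum>r\<in>R. V r * cc r) + (\<Sum>r\<in>R. V r * cnj (V r))"
      by (simp add: cnjcc algebra_simps sum.distrib sum_subtractf)
    also have "\<dots> = complex_of_real (\<Sum>r\<in>R. (c r)^2) - complex_of_real A / complex_of_real P"
      unfolding S1 S2 S3 by (simp add: cc_def power2_eq_square)
    finally show ?thesis .
  qed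
  have "complex_of_real ((\<Sum>r\<in>R. (c r)^2) - A / P)
      = complex_of_real (\<Sum>r\<in>R. (c r)^2) - complex_of_real A / complex_of_real P"
    by (simp only: of_real_diff of_real_divide)
  also have "\<dots> = (\<Sum>r\<in>R. (cc r - V r) * cnj (cc r - V r))" using E by (rule sym)
  also have "\<dots> = complex_of_real (\<Sum>r\<in>R. (cmod (cc r - V r))^2)"
    by (simp only: of_real_sum complex_norm_square)
  finally have "(\<Sum>r\<in>R. (c r)^2) - A / P = (\<Sum>r\<in>R. (cmod (cc r - V r))^2)"
    by (simp only: of_real_eq_iff)
  moreover have "(\<Sum>r\<in>R. (cmod (cc r - V r))^2) \<ge> 0" by (intro sum_nonneg) auto
  ultimately have "A / P \<le> (\<Sum>r\<in>R. (c r)^2)" by linarith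
  hence "A \<le> P * (\<Sum>r\<in>R. (c r)^2)" using P by (simp add: field_simps)
  thus ?thesis by (simp add: A_def absa[unfolded cc_def])
qed


context
  fixes Q :: int and \<chi> :: "int \<Rightarrow> complex"
  assumes Q: "Q > 1" and ch: "dirichlet_char Q \<chi>"
begin

lemma ch_per1: "\<chi> (n + Q) = \<chi> n" using ch by (simp add: dirichlet_char_def)
lemma ch_mult: "\<chi> (m * n) = \<chi> m * \<chi> n" using ch by (simp add: dirichlet_char_def)
lemma ch_one: "\<chi> 1 = 1" using ch by (simp add: dirichlet_char_def)
lemma ch_zero: "\<chi> n = 0 \<longleftrightarrow> \<not> coprime n Q" using ch by (simp add: dirichlet_char_def)

lemma ch_per: "\<chi> (n + k * Q) = \<chi> n"
proof (induction k arbitrary: n rule: int_induct[where k=0])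
  case base then show ?case by simp
next
  case (step1 i) 
  have "\<chi> (n + (i + 1) * Q) = \<chi> ((n + i * Q) + Q)" by (simp add: algebra_simps)
  also have "\<dots> = \<chi> n" using ch_per1 step1 by simp
  finally show ?case .
next
  case (step2 i)
  have "\<chi> (n + (i - 1) * Q) = \<chi> ((n + (i - 1) * Q) + Q)" using ch_per1 by simp
  also have "\<dots> = \<chi> (n + i * Q)" by (simp add: algebra_simps)
  also have "\<dots> = \<chi> n" using step2 by simp
  finally show ?case .
qed

lemma ch_mod: "\<chi> (n mod Q) = \<chi> n"
proof -
  have "\<chi> (n mod Q) = \<chi> (n mod Q + (n div Q) * Q)" by (rule ch_per[symmetric])
  also have "n mod Q + (n div Q) * Q = n" by simp
  finally show ?thesis .
qed

lemma ch_cong: "n mod Q = m mod Q \<Longrightarrow> \<chi> n = \<chi> m"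
  using ch_mod[of n] ch_mod[of m] by simp

lemma ch_pow: "\<chi> (x ^ k) = (\<chi> x) ^ k"
  by (induction k) (simp_all add: ch_one ch_mult)

lemma euler_int: "Q > (1::int) \<Longrightarrow> coprime x Q \<Longrightarrow> [x ^ totient (nat Q) = 1] (mod Q)"
proof -
  assume "Q > 1" "coprime x Q"
  hence "residues Q" by (simp add: residues_def)
  thus ?thesis using residues.euler_theorem \<open>coprime x Q\<close> by blast
qed

lemma ch_unit: assumes "coprime x Q" shows "cmod (\<chi> x) = 1"
proof -
  define t where "t = totient (nat Q)"
  have "[x ^ t = 1] (mod Q)" using euler_int[OF Q assms] by (simp add: t_def)
  hence "(x ^ t) mod Q = 1 mod Q" by (simp add: cong_def)
  hence "\<chi> (x ^ t) = \<chi> 1" by (rule ch_cong)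
  hence "(\<chi> x) ^ t = 1" by (simp add: ch_pow ch_one)
  hence "cmod ((\<chi> x) ^ t) = 1" by simp
  hence "(cmod (\<chi> x)) ^ t = 1 ^ t" by (simp only: norm_power power_one)
  moreover have "t > 0" using Q by (simp add: t_def)
  ultimately show ?thesis using power_eq_imp_eq_base[of "cmod (\<chi> x)" t 1] by simp
qed

lemma ch_norm_sq: "\<chi> r * cnj (\<chi> r) = (if coprime r Q then 1 else 0)"
proof (cases "coprime r Q")
  case True
  have "\<chi> r * cnj (\<chi> r) = complex_of_real ((cmod (\<chi> r))^2)" by (rule complex_norm_square[symmetric])
  then show ?thesis using True ch_unit by simp
next
  case False
  then show ?thesis using ch_zero by simp
qed

end

lemma chars_orth:
  fixes Q :: int
  assumes Q: "Q > 1" and c1: "dirichlet_char Q \<chi>" and c2: "dirichlet_char Q \<psi>"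
  shows "(\<Sum>r\<in>{0..<Q}. \<chi> r * cnj (\<psi> r)) =
     (if \<chi> = \<psi> then complex_of_real (real (card {r\<in>{0..<Q}. coprime r Q})) else 0)"
proof (cases "\<chi> = \<psi>")
  case True
  have "(\<Sum>r\<in>{0..<Q}. \<chi> r * cnj (\<chi> r)) = (\<Sum>r\<in>{0..<Q}. if coprime r Q then 1 else 0)"
    using ch_norm_sq[OF Q c1] by simp
  also have "\<dots> = of_nat (card {r\<in>{0..<Q}. coprime r Q})"
    by (simp add: sum.If_cases) (intro arg_cong[where f=card]; auto)
  finally show ?thesis using True by simp
next
  case False
  then obtain a where ne: "\<chi> a \<noteq> \<psi> a" by blast
  have cop: "coprime a Q" using ne ch_zero[OF Q c1, of a] ch_zero[OF Q c2, of a] by auto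
  define R where "R = {0..<Q}"
  define f where "f = (\<lambda>r. (a * r) mod Q)"
  have inj: "inj_on f R"
  proof (rule inj_onI)
    fix r s assume r: "r \<in> R" and s: "s \<in> R" and e: "f r = f s"
    hence "[a * r = a * s] (mod Q)" by (simp add: f_def cong_def)
    hence "[r = s] (mod Q)" using cop by (simp add: cong_mult_lcancel)
    thus "r = s" using r s by (simp add: R_def cong_def)
  qed
  have img: "f ` R \<subseteq> R" using Q by (auto simp: f_def R_def)
  have bij: "bij_betw f R R" using endo_inj_surj[OF _ img inj] inj by (simp add: bij_betw_def R_def)
  define T where "T = (\<Sum>r\<in>R. \<chi> r * cnj (\<psi> r))"
  have "T = (\<Sum>r\<in>R. \<chi> (f r) * cnj (\<psi> (f r)))"
    unfolding T_def by (rule sum.reindex_bij_betw[OF bij, symmetric])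
  also have "\<dots> = (\<Sum>r\<in>R. (\<chi> a * cnj (\<psi> a)) * (\<chi> r * cnj (\<psi> r)))"
    by (intro sum.cong refl)
       (simp add: f_def ch_mod[OF Q c1] ch_mod[OF Q c2] ch_mult[OF Q c1] ch_mult[OF Q c2] mult_ac)
  also have "\<dots> = (\<chi> a * cnj (\<psi> a)) * T" by (simp add: T_def sum_distrib_left)
  finally have TT: "T = (\<chi> a * cnj (\<psi> a)) * T" .
  have "T = 0"
  proof (rule ccontr)
    assume "T \<noteq> 0"
    have "(\<chi> a * cnj (\<psi> a) - 1) * T = 0" using TT by (simp add: algebra_simps)
    hence k1: "\<chi> a * cnj (\<psi> a) = 1" using \<open>T \<noteq> 0\<close> by simp
    have "\<chi> a = \<chi> a * (\<psi> a * cnj (\<psi> a))" using ch_norm_sq[OF Q c2, of a] cop by simp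
    also have "\<dots> = (\<chi> a * cnj (\<psi> a)) * \<psi> a" by (simp add: mult_ac)
    also have "\<dots> = \<psi> a" using k1 by simp
    finally have "\<chi> a = \<psi> a" .
    thus False using ne by simp
  qed
  thus ?thesis using False by (simp add: T_def R_def)
qed

lemma char_sum_regroup:
  fixes Q :: int and X :: "'a set" and g :: "'a \<Rightarrow> int"
  assumes Q: "Q > 1" and c: "dirichlet_char Q \<chi>" and X: "finite X"
  shows "(\<Sum>p\<in>X. \<chi> (g p)) = (\<Sum>r\<in>{0..<Q}. complex_of_real (real (card {p\<in>X. g p mod Q = r})) * \<chi> r)"
proof -
  have "(\<Sum>p\<in>X. \<chi> (g p)) = (\<Sum>p\<in>X. \<chi> (g p mod Q))" using ch_mod[OF Q c] by simp
  also have "\<dots> = (\<Sum>r\<in>{0..<Q}. \<Sum>p\<in>{p. p \<in> X \<and> g p mod Q = r}. \<chi> (g p mod Q))"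
    using Q X by (intro sum.group[symmetric]) auto
  also have "\<dots> = (\<Sum>r\<in>{0..<Q}. \<Sum>p\<in>{p. p \<in> X \<and> g p mod Q = r}. \<chi> r)"
    by (intro sum.cong refl) auto
  also have "\<dots> = (\<Sum>r\<in>{0..<Q}. complex_of_real (real (card {p\<in>X. g p mod Q = r})) * \<chi> r)"
    by simp
  finally show ?thesis .
qed

lemma sum_sq_fibres:
  fixes Q :: int and X :: "'a set" and g :: "'a \<Rightarrow> int"
  assumes Q: "Q > 0" and X: "finite X"
  shows "(\<Sum>r\<in>{0..<Q}. (real (card {p\<in>X. g p mod Q = r}))^2)
       = real (card {(p,p'). p \<in> X \<and> p' \<in> X \<and> g p mod Q = g p' mod Q})"
proof -
  define Y where "Y = {(p,p'). p \<in> X \<and> p' \<in> X \<and> g p mod Q = g p' mod Q}"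
  have finY: "finite Y" by (rule finite_subset[of _ "X \<times> X"]) (auto simp: Y_def X)
  have img: "(\<lambda>z. g (fst z) mod Q) ` Y \<subseteq> {0..<Q}" using Q by auto
  have "(\<Sum>r\<in>{0..<Q}. \<Sum>z\<in>{z. z \<in> Y \<and> g (fst z) mod Q = r}. (1::nat)) = (\<Sum>z\<in>Y. 1)"
    by (rule sum.group[OF finY finite_atLeastLessThan_int img])
  hence "card Y = (\<Sum>r\<in>{0..<Q}. card {z. z \<in> Y \<and> g (fst z) mod Q = r})"
    by simp
  also have "\<dots> = (\<Sum>r\<in>{0..<Q}. card ({p\<in>X. g p mod Q = r} \<times> {p\<in>X. g p mod Q = r}))"
    by (intro sum.cong refl arg_cong[where f=card]) (auto simp: Y_def)
  also have "\<dots> = (\<Sum>r\<in>{0..<Q}. (card {p\<in>X. g p mod Q = r})^2)"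
    by (simp add: card_cartesian_product power2_eq_square)
  finally show ?thesis by (simp add: Y_def)
qed


lemma Z_bound:
  fixes n Q :: int and R :: real
  assumes Q: "Q > 0" and n: "n \<ge> 0" and R0: "R \<ge> 0"
    and R: "\<And>m. m \<noteq> 0 \<Longrightarrow> \<bar>m\<bar> \<le> n^2 \<Longrightarrow>
        real (card {(x,y). x \<in> {-n..n} \<and> y \<in> {-n..n} \<and> x^2 - y^2 = m}) \<le> R"
  shows "real (card {(x,y). x \<in> {-n..n} \<and> y \<in> {-n..n} \<and> Q dvd (x^2 - y^2)})
          \<le> 2 * (2 * n + 1) + (2 * n^2 / Q + 2) * R"
proof -
  define B where "B = {-n..n}"
  define Z0 where "Z0 = {(x,y). x \<in> B \<and> y \<in> B \<and> x^2 - y^2 = 0}"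
  define S where "S = {(x,y). x \<in> B \<and> y \<in> B \<and> (x^2 - y^2) mod Q = 0 mod Q \<and> x^2 - y^2 \<noteq> 0}"
  have finB: "finite B" by (simp add: B_def)
  have "{(x,y). x \<in> B \<and> y \<in> B \<and> Q dvd (x^2 - y^2)} \<subseteq> Z0 \<union> S"
    by (auto simp: Z0_def S_def dvd_eq_mod_eq_0)
  moreover have "finite S" by (rule finite_subset[of _ "B \<times> B"]) (auto simp: S_def finB)
  moreover have "finite Z0" by (rule finite_subset[of _ "B \<times> B"]) (auto simp: Z0_def finB)
  ultimately have "card {(x,y). x \<in> B \<and> y \<in> B \<and> Q dvd (x^2 - y^2)} \<le> card (Z0 \<union> S)"
    by (intro card_mono) auto
  also have "\<dots> \<le> card Z0 + card S" by (rule card_Un_le)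
  finally have c1: "real (card {(x,y). x \<in> B \<and> y \<in> B \<and> Q dvd (x^2 - y^2)}) \<le> real (card Z0) + real (card S)"
    by linarith
  have "Z0 \<subseteq> (\<lambda>x. (x,x)) ` B \<union> (\<lambda>x. (x,-x)) ` B"
  proof
    fix z assume "z \<in> Z0"
    then obtain x y where z: "z = (x,y)" "x \<in> B" "y \<in> B" "x^2 = y^2" by (auto simp: Z0_def)
    hence "y = x \<or> y = -x" using power2_eq_iff by metis
    thus "z \<in> (\<lambda>x. (x,x)) ` B \<union> (\<lambda>x. (x,-x)) ` B" using z by auto
  qed
  hence "card Z0 \<le> card ((\<lambda>x. (x,x)) ` B \<union> (\<lambda>x. (x,-x)) ` B)" using finB by (intro card_mono) auto
  also have "\<dots> \<le> card ((\<lambda>x. (x,x)) ` B) + card ((\<lambda>x. (x,-x)) ` B)" by (rule card_Un_le)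
  also have "\<dots> \<le> card B + card B" by (intro add_mono card_image_le finB)
  finally have "real (card Z0) \<le> 2 * real (card B)" by linarith
  also have "real (card B) = 2 * n + 1" using n by (simp add: B_def)
  finally have c2: "real (card Z0) \<le> 2 * (2 * n + 1)" by simp
  have c3: "real (card S) \<le> (2 * n^2 / Q + 2) * R"
    using count_L[OF Q n R0 R, of 0] by (simp add: S_def B_def)
  show ?thesis using c1 c2 c3 by (simp add: B_def)
qed

lemma count_main:
  fixes n Q a :: int and R :: real and g :: "int \<times> int \<Rightarrow> int"
  assumes Q: "Q > 0" and n: "n \<ge> 0" and R0: "R \<ge> 0" and cop: "coprime a Q"
    and R: "\<And>m. m \<noteq> 0 \<Longrightarrow> \<bar>m\<bar> \<le> n^2 \<Longrightarrow>
        real (card {(x,y). x \<in> {-n..n} \<and> y \<in> {-n..n} \<and> x^2 - y^2 = m}) \<le> R"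
    and g: "g = (\<lambda>(x1,x2). x1^2 + a * x2^2)"
  shows "real (card {(p,p'). p \<in> {-n..n} \<times> {-n..n} \<and> p' \<in> {-n..n} \<times> {-n..n} \<and> g p mod Q = g p' mod Q})
     \<le> (real (card {(x,y). x \<in> {-n..n} \<and> y \<in> {-n..n} \<and> Q dvd (x^2 - y^2)}))^2
        + (2 * n + 1)^2 * ((2 * n^2 / Q + 2) * R)"
proof -
  define B where "B = {-n..n}"
  define D where "D = (\<lambda>(x::int,y::int). x^2 - y^2)"
  define E where "E = {(p,p'). p \<in> B \<times> B \<and> p' \<in> B \<times> B \<and> g p mod Q = g p' mod Q}"
  define E' where "E' = {(u,v). u \<in> B \<times> B \<and> v \<in> B \<times> B \<and> Q dvd (D u + a * D v)}"
  define Z1 where "Z1 = {(x,y). x \<in> B \<and> y \<in> B \<and> Q dvd (x^2 - y^2)}"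
  define S where "S = (\<lambda>v. {(x,y). x \<in> B \<and> y \<in> B \<and> (x^2 - y^2) mod Q = (- a * D v) mod Q \<and> x^2 - y^2 \<noteq> 0})"
  define \<phi> where "\<phi> = (\<lambda>((x1::int,y1::int),(x2::int,y2::int)). ((x1,x2),(y1,y2)))"
  have finB: "finite B" by (simp add: B_def)
  have finBB: "finite (B \<times> B)" using finB by simp
  have finE': "finite E'" by (rule finite_subset[of _ "(B \<times> B) \<times> (B \<times> B)"]) (auto simp: E'_def finB)
  have finZ1: "finite Z1" by (rule finite_subset[of _ "B \<times> B"]) (auto simp: Z1_def finB)
  have finS: "finite (S v)" for v by (rule finite_subset[of _ "B \<times> B"]) (auto simp: S_def finB)
  have "E \<subseteq> \<phi> ` E'"
  proof
    fix z assume "z \<in> E"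
    then obtain x1 x2 y1 y2 where z: "z = ((x1,x2),(y1,y2))" "x1 \<in> B" "x2 \<in> B" "y1 \<in> B" "y2 \<in> B"
      and e: "(x1^2 + a * x2^2) mod Q = (y1^2 + a * y2^2) mod Q" by (auto simp: E_def g)
    have "Q dvd (x1^2 + a * x2^2) - (y1^2 + a * y2^2)" using e by (simp add: mod_eq_dvd_iff)
    moreover have "(x1^2 + a * x2^2) - (y1^2 + a * y2^2) = D (x1,y1) + a * D (x2,y2)"
      by (simp add: D_def algebra_simps)
    ultimately have "((x1,y1),(x2,y2)) \<in> E'" using z by (simp add: E'_def)
    moreover have "\<phi> ((x1,y1),(x2,y2)) = z" using z by (simp add: \<phi>_def)
    ultimately show "z \<in> \<phi> ` E'" by force
  qed
  hence "card E \<le> card (\<phi> ` E')" using finE' by (intro card_mono) auto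
  also have "\<dots> \<le> card E'" using finE' by (rule card_image_le)
  finally have cE: "card E \<le> card E'" .
  have "E' \<subseteq> Z1 \<times> Z1 \<union> (\<Union>v\<in>B \<times> B. S v \<times> {v})"
  proof
    fix z assume "z \<in> E'"
    then obtain u v where z: "z = (u,v)" "u \<in> B \<times> B" "v \<in> B \<times> B" and dv: "Q dvd (D u + a * D v)"
      by (auto simp: E'_def)
    obtain x y where u: "u = (x,y)" by force
    show "z \<in> Z1 \<times> Z1 \<union> (\<Union>v\<in>B \<times> B. S v \<times> {v})"
    proof (cases "Q dvd D v")
      case True
      hence "Q dvd a * D v" by simp
      hence "Q dvd D u" using dv by (metis dvd_add_left_iff)
      hence "u \<in> Z1" "v \<in> Z1" using z True u by (auto simp: Z1_def D_def)
      thus ?thesis using z by auto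
    next
      case False
      have "D u mod Q = (- a * D v) mod Q" using dv by (simp add: mod_eq_dvd_iff)
      moreover have "D u \<noteq> 0"
      proof
        assume "D u = 0"
        hence "Q dvd a * D v" using dv by simp
        hence "Q dvd D v" using cop by (metis coprime_commute coprime_dvd_mult_right_iff)
        thus False using False by simp
      qed
      ultimately have "u \<in> S v" using z u by (auto simp: S_def D_def)
      thus ?thesis using z by auto
    qed
  qed
  hence "card E' \<le> card (Z1 \<times> Z1 \<union> (\<Union>v\<in>B \<times> B. S v \<times> {v}))"
    using finZ1 finS finBB by (intro card_mono) auto
  also have "\<dots> \<le> card (Z1 \<times> Z1) + card (\<Union>v\<in>B \<times> B. S v \<times> {v})" by (rule card_Un_le)
  also have "card (\<Union>v\<in>B \<times> B. S v \<times> {v}) \<le> (\<Sum>v\<in>B \<times> B. card (S v \<times> {v}))"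
    using finBB by (rule card_UN_le)
  finally have "card E' \<le> card Z1 * card Z1 + (\<Sum>v\<in>B \<times> B. card (S v))"
    by (simp add: card_cartesian_product)
  hence "real (card E) \<le> real (card Z1) * real (card Z1) + (\<Sum>v\<in>B \<times> B. real (card (S v)))"
    using cE by (metis (no_types) of_nat_add of_nat_le_iff of_nat_mult of_nat_sum order_trans)
  also have "(\<Sum>v\<in>B \<times> B. real (card (S v))) \<le> real (card (B \<times> B)) * ((2 * n^2 / Q + 2) * R)"
  proof (rule sum_bounded_above)
    fix v assume "v \<in> B \<times> B"
    show "real (card (S v)) \<le> (2 * n^2 / Q + 2) * R"
      using count_L[OF Q n R0 R, of "- a * D v"] by (simp add: S_def B_def)
  qed
  also have "real (card (B \<times> B)) = (2 * n + 1)^2" using n by (simp add: B_def card_cartesian_product power2_eq_square)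
  finally show ?thesis by (simp add: E_def Z1_def B_def power2_eq_square)
qed


lemma arith_final:
  fixes N q K \<epsilon> Zc T R :: real
  assumes N: "N \<ge> 1" and q: "q > 2 * N" and K: "K > 0" and e: "\<epsilon> > 0"
    and Rdef: "R = 2 * K * N powr (\<epsilon>/2)"
    and Z0: "Zc \<ge> 0" and Z: "Zc \<le> 2 * (2 * N + 1) + (2 * N^2 / q + 2) * R"
    and T: "T \<le> Zc^2 + (2 * N + 1)^2 * ((2 * N^2 / q + 2) * R)"
  shows "T \<le> (72 + 48 * K^2 + 36 * K) * N powr (2 + \<epsilon>) * (1 + N^2 / q)"
proof -
  define t where "t = N powr (\<epsilon>/2)"
  define W where "W = 1 + N^2 / q"
  have qp: "q > 0" using q N by linarith
  have t1: "t \<ge> 1" using N e by (simp add: t_def ge_one_powr_ge_zero)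
  have W1: "W \<ge> 1" using qp by (simp add: W_def)
  have "N^2 / q \<le> N / 2"
  proof -
    have "N^2 = N * N" by (simp add: power2_eq_square)
    also have "\<dots> \<le> N * (q / 2)" using q N by (intro mult_left_mono) auto
    finally show ?thesis using qp by (simp add: field_simps)
  qed
  hence W2: "W \<le> 3/2 * N" using N by (simp add: W_def)
  have Npe: "N powr (2 + \<epsilon>) = N^2 * t^2"
  proof -
    have "N powr (2 + \<epsilon>) = N powr 2 * N powr (\<epsilon>/2) * N powr (\<epsilon>/2)"
    proof -
      have "2 + \<epsilon> = 2 + \<epsilon>/2 + \<epsilon>/2" by simp
      thus ?thesis by (simp only: powr_add)
    qed
    thus ?thesis using N by (simp add: t_def powr_numeral power2_eq_square)
  qed
  have LR: "(2 * N^2 / q + 2) * R = 4 * K * W * t" by (simp add: Rdef W_def t_def field_simps)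
  have "Zc \<le> 2 * (2 * N + 1) + 4 * K * W * t" using Z unfolding LR .
  moreover have "2 * (2 * N + 1) + 4 * K * W * t \<le> 6 * N + 4 * K * W * t" using N by simp
  ultimately have h1: "Zc \<le> 6 * N + 4 * K * W * t" by (rule order_trans)
  have h2: "Zc^2 \<le> 72 * N^2 + 32 * K^2 * W^2 * t^2"
  proof -
    have "Zc^2 \<le> (6 * N + 4 * K * W * t)^2" using h1 Z0 by (intro power_mono) auto
    also have "\<dots> \<le> 72 * N^2 + 32 * K^2 * W^2 * t^2"
      using sum_squares_ge_zero[of "6*N - 4*K*W*t" 0] by (simp add: power2_eq_square algebra_simps)
    finally show ?thesis .
  qed
  have "W^2 \<le> 3/2 * N^2 * W"
  proof -
    have "W * W \<le> (3/2 * N) * W" using W2 W1 by (intro mult_right_mono) auto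
    also have "\<dots> \<le> 3/2 * (N * N) * W" using N W1 by (intro mult_right_mono) (auto simp: power2_eq_square)
    finally show ?thesis by (simp add: power2_eq_square)
  qed
  hence h3: "32 * K^2 * W^2 * t^2 \<le> 32 * K^2 * (3/2 * N^2 * W) * t^2"
    by (intro mult_right_mono mult_left_mono) auto
  have "2 * N + 1 \<le> 3 * N" using N by simp
  hence "(2 * N + 1)^2 \<le> (3 * N)^2" using N by (intro power_mono) auto
  hence "(2 * N + 1)^2 \<le> 9 * N^2" by (simp add: power_mult_distrib)
  hence h4: "(2 * N + 1)^2 * (4 * K * W * t) \<le> 9 * N^2 * (4 * K * W * t^2)"
  proof -
    assume a: "(2 * N + 1)^2 \<le> 9 * N^2"
    have "t \<le> t^2" using t1 by (simp add: power2_eq_square)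
    hence c1: "4 * K * W * t \<le> 4 * K * W * t^2" using K W1 by (intro mult_left_mono) auto
    have c0: "4 * K * W * t \<ge> 0" using K W1 t1 by simp
    show ?thesis by (rule mult_mono[OF a c1]) (use c0 in auto)
  qed
  have h5: "72 * N^2 \<le> 72 * N^2 * W * t^2"
  proof -
    have "1 \<le> W * t^2" using W1 t1 by (metis mult_mono one_le_power mult_1 zero_le_one order_trans)
    thus ?thesis by (metis mult.assoc mult_left_mono mult_1_right zero_le_power2 mult_nonneg_nonneg zero_le_numeral)
  qed
  have "T \<le> 72 * N^2 * W * t^2 + 32 * K^2 * (3/2 * N^2 * W) * t^2 + 9 * N^2 * (4 * K * W * t^2)"
  proof -
    have A: "Zc^2 \<le> 72 * N^2 * W * t^2 + 32 * K^2 * (3/2 * N^2 * W) * t^2"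
      using h2 add_mono[OF h5 h3] by (rule order_trans)
    have B: "T \<le> Zc^2 + (2 * N + 1)^2 * (4 * K * W * t)" using T unfolding LR .
    show ?thesis using B add_mono[OF A h4] by (rule order_trans)
  qed
  also have "\<dots> = (72 + 48 * K^2 + 36 * K) * N powr (2 + \<epsilon>) * W"
    unfolding Npe by (simp add: algebra_simps)
  finally show ?thesis by (simp add: W_def)
qed


theorem mainTheorem6:
  "\<forall>\<epsilon>::real. \<epsilon> > 0 \<longrightarrow>
     (\<exists>C::real. C > 0 \<and>
       (\<forall>(q::nat) (\<alpha>\<^sub>2::int) (N::nat).
          odd q \<longrightarrow> coprime \<alpha>\<^sub>2 (int q) \<longrightarrow> N \<ge> 1 \<longrightarrow> real N < real q / 2 \<longrightarrow>
          (\<Sum>\<chi>\<in>{\<chi>. dirichlet_char (int q) \<chi>}.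
              (cmod (\<Sum>x\<^sub>1\<in>{-int N..int N}. \<Sum>x\<^sub>2\<in>{-int N..int N}.
                        \<chi> (x\<^sub>1^2 + \<alpha>\<^sub>2 * x\<^sub>2^2)))^2)
          \<le> C * real q * real N powr (2 + \<epsilon>) * (1 + (real N)^2 / real q)))"
proof (intro allI impI)
  fix \<epsilon> :: real assume e: "\<epsilon> > 0"
  obtain K where K: "K > 0" and dK: "\<And>n::nat. n > 0 \<Longrightarrow> real (card {d. d dvd n}) \<le> K * real n powr (\<epsilon>/4)"
    using divisor_bound[of "\<epsilon>/4"] e by auto
  define C where "C = 72 + 48 * K^2 + 36 * K"
  have C: "C > 0" using K by (simp add: C_def add_pos_nonneg)
  show "\<exists>C::real. C > 0 \<and>
       (\<forall>(q::nat) (\<alpha>\<^sub>2::int) (N::nat).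
          odd q \<longrightarrow> coprime \<alpha>\<^sub>2 (int q) \<longrightarrow> N \<ge> 1 \<longrightarrow> real N < real q / 2 \<longrightarrow>
          (\<Sum>\<chi>\<in>{\<chi>. dirichlet_char (int q) \<chi>}.
              (cmod (\<Sum>x\<^sub>1\<in>{-int N..int N}. \<Sum>x\<^sub>2\<in>{-int N..int N}.
                        \<chi> (x\<^sub>1^2 + \<alpha>\<^sub>2 * x\<^sub>2^2)))^2)
          \<le> C * real q * real N powr (2 + \<epsilon>) * (1 + (real N)^2 / real q))"
  proof (intro exI[of _ C] conjI C allI impI)
    fix q :: nat and a :: int and N :: nat
    assume oq: "odd q" and cop: "coprime a (int q)" and N1: "N \<ge> 1" and Nq: "real N < real q / 2"
    define Q where "Q = int q"
    define n where "n = int N"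
    define B where "B = {-n..n}"
    define X where "X = B \<times> B"
    define g where "g = (\<lambda>(x1::int, x2::int). x1^2 + a * x2^2)"
    define G where "G = {\<chi>. dirichlet_char Q \<chi>}"
    define c where "c = (\<lambda>r. real (card {p\<in>X. g p mod Q = r}))"
    define P where "P = real (card {r\<in>{0..<Q}. coprime r Q})"
    define R where "R = 2 * K * real N powr (\<epsilon>/2)"
    define E where "E = {(p,p'). p \<in> X \<and> p' \<in> X \<and> g p mod Q = g p' mod Q}"
    define Zc where "Zc = real (card {(x,y). x \<in> {-n..n} \<and> y \<in> {-n..n} \<and> Q dvd (x^2 - y^2)})"
    have qN: "real q > 2 * real N" using Nq by simp
    have Q1: "Q > 1" using qN N1 by (simp add: Q_def)
    have n0: "n \<ge> 0" by (simp add: n_def)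
    have finX: "finite X" by (simp add: X_def B_def)
    have R0: "R \<ge> 0" using K by (simp add: R_def)
    have Srw: "(\<Sum>x\<^sub>1\<in>{-int N..int N}. \<Sum>x\<^sub>2\<in>{-int N..int N}. \<chi> (x\<^sub>1^2 + a * x\<^sub>2^2))
        = (\<Sum>r\<in>{0..<Q}. complex_of_real (c r) * \<chi> r)" if "\<chi> \<in> G" for \<chi>
    proof -
      have ch: "dirichlet_char Q \<chi>" using that by (simp add: G_def)
      have "(\<Sum>x\<^sub>1\<in>{-int N..int N}. \<Sum>x\<^sub>2\<in>{-int N..int N}. \<chi> (x\<^sub>1^2 + a * x\<^sub>2^2))
          = (\<Sum>p\<in>X. \<chi> (g p))"
        by (simp add: sum.cartesian_product X_def B_def n_def g_def case_prod_beta)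
      also have "\<dots> = (\<Sum>r\<in>{0..<Q}. complex_of_real (c r) * \<chi> r)"
        unfolding c_def by (rule char_sum_regroup[OF Q1 ch finX])
      finally show ?thesis .
    qed
    have step1: "(\<Sum>\<chi>\<in>G. (cmod (\<Sum>x\<^sub>1\<in>{-int N..int N}. \<Sum>x\<^sub>2\<in>{-int N..int N}. \<chi> (x\<^sub>1^2 + a * x\<^sub>2^2)))^2)
        \<le> P * real (card E)"
    proof (cases "finite G")
      case True
      have "(\<Sum>\<chi>\<in>G. (cmod (\<Sum>x\<^sub>1\<in>{-int N..int N}. \<Sum>x\<^sub>2\<in>{-int N..int N}. \<chi> (x\<^sub>1^2 + a * x\<^sub>2^2)))^2)
          = (\<Sum>\<chi>\<in>G. (cmod (\<Sum>r\<in>{0..<Q}. complex_of_real (c r) * \<chi> r))^2)"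
        by (intro sum.cong refl) (simp add: Srw)
      also have "\<dots> \<le> P * (\<Sum>r\<in>{0..<Q}. (c r)^2)"
      proof (rule bessel_chars[OF True])
        show "finite {0..<Q}" by simp
        have "1 \<in> {r\<in>{0..<Q}. coprime r Q}" using Q1 by simp
        moreover have "finite {r\<in>{0..<Q}. coprime r Q}" by (rule finite_subset[of _ "{0..<Q}"]) auto
        ultimately have "card {r\<in>{0..<Q}. coprime r Q} > 0" using card_gt_0_iff by blast
        thus "P > 0" unfolding P_def by simp
        fix \<chi> \<psi> assume "\<chi> \<in> G" "\<psi> \<in> G"
        thus "(\<Sum>r\<in>{0..<Q}. \<chi> r * cnj (\<psi> r)) = (if \<chi> = \<psi> then complex_of_real P else 0)"
          using chars_orth[OF Q1] by (simp add: G_def P_def)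
      qed
      also have "(\<Sum>r\<in>{0..<Q}. (c r)^2) = real (card E)"
        unfolding c_def E_def using sum_sq_fibres[of Q X g] Q1 finX by simp
      finally show ?thesis .
    next
      case False
      have "P \<ge> 0" by (simp add: P_def)
      thus ?thesis using False by simp
    qed
    have Rh: "real (card {(x,y). x \<in> {-n..n} \<and> y \<in> {-n..n} \<and> x^2 - y^2 = m}) \<le> R"
      if m0: "m \<noteq> 0" and mb: "\<bar>m\<bar> \<le> n^2" for m
    proof -
      have "card {(x,y). x \<in> {-n..n} \<and> y \<in> {-n..n} \<and> x^2 - y^2 = m} \<le> 2 * card {d::nat. d dvd nat \<bar>m\<bar>}"
        by (rule reps_card[OF m0])
      hence "real (card {(x,y). x \<in> {-n..n} \<and> y \<in> {-n..n} \<and> x^2 - y^2 = m}) \<le> 2 * real (card {d::nat. d dvd nat \<bar>m\<bar>})"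
        by linarith
      also have "\<dots> \<le> 2 * (K * real (nat \<bar>m\<bar>) powr (\<epsilon>/4))"
        using dK[of "nat \<bar>m\<bar>"] m0 by simp
      also have "\<dots> \<le> 2 * (K * (real N ^ 2) powr (\<epsilon>/4))"
      proof -
        have "real (nat \<bar>m\<bar>) = real_of_int \<bar>m\<bar>" by simp
        also have "\<dots> \<le> real_of_int (n^2)" using mb by (simp only: of_int_le_iff)
        also have "\<dots> = real N ^ 2" by (simp add: n_def)
        finally have "real (nat \<bar>m\<bar>) \<le> real N ^ 2" .
        hence "real (nat \<bar>m\<bar>) powr (\<epsilon>/4) \<le> (real N ^ 2) powr (\<epsilon>/4)" using e by (intro powr_mono2) auto
        thus ?thesis using K by simp
      qed
      also have "(real N ^ 2) powr (\<epsilon>/4) = real N powr (\<epsilon>/2)"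
      proof -
        have "real N ^ 2 = real N powr 2" by (rule powr_numeral[symmetric]) (use N1 in simp)
        hence "(real N ^ 2) powr (\<epsilon>/4) = real N powr (2 * (\<epsilon>/4))" by (simp only: powr_powr)
        also have "2 * (\<epsilon>/4) = \<epsilon>/2" by simp
        finally show ?thesis .
      qed
      finally show ?thesis by (simp add: R_def)
    qed
    have Zb: "Zc \<le> 2 * (2 * n + 1) + (2 * n^2 / Q + 2) * R"
    proof -
      have Q0: "Q > 0" using Q1 by simp
      show ?thesis unfolding Zc_def by (rule Z_bound[OF Q0 n0 R0 Rh])
    qed
    have Eb: "real (card E) \<le> Zc^2 + (2 * n + 1)^2 * ((2 * n^2 / Q + 2) * R)"
    proof -
      have Q0: "Q > 0" using Q1 by simp
      have cop': "coprime a Q" using cop by (simp add: Q_def)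
      show ?thesis unfolding E_def Zc_def X_def B_def
        by (rule count_main[OF Q0 n0 R0 cop' Rh g_def])
    qed
    have T: "real (card E) \<le> C * real N powr (2 + \<epsilon>) * (1 + (real N)^2 / real q)"
    proof -
      have "real (card E) \<le> (72 + 48 * K^2 + 36 * K) * real N powr (2 + \<epsilon>) * (1 + (real N)^2 / real q)"
      proof (rule arith_final[of "real N" "real q" K \<epsilon> R Zc])
        show "1 \<le> real N" using N1 by simp
        show "2 * real N < real q" using qN by simp
        show "0 < K" by (rule K)
        show "0 < \<epsilon>" by (rule e)
        show "R = 2 * K * real N powr (\<epsilon> / 2)" by (simp add: R_def)
        show "0 \<le> Zc" by (simp add: Zc_def)
        show "Zc \<le> 2 * (2 * real N + 1) + (2 * (real N)^2 / real q + 2) * R"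
          using Zb by (simp add: n_def Q_def)
        show "real (card E) \<le> Zc^2 + (2 * real N + 1)^2 * ((2 * (real N)^2 / real q + 2) * R)"
          using Eb by (simp add: n_def Q_def)
      qed
      thus ?thesis by (simp add: C_def)
    qed
    have Pq: "P \<le> real q"
    proof -
      have "card {r\<in>{0..<Q}. coprime r Q} \<le> card {0..<Q}" by (intro card_mono) auto
      thus ?thesis by (simp add: P_def Q_def)
    qed
    have "P * real (card E) \<le> real q * (C * real N powr (2 + \<epsilon>) * (1 + (real N)^2 / real q))"
      using Pq T by (intro mult_mono) (auto simp: P_def)
    with step1 show "(\<Sum>\<chi>\<in>{\<chi>. dirichlet_char (int q) \<chi>}.
              (cmod (\<Sum>x\<^sub>1\<in>{-int N..int N}. \<Sum>x\<^sub>2\<in>{-int N..int N}.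
                        \<chi> (x\<^sub>1^2 + a * x\<^sub>2^2)))^2)
          \<le> C * real q * real N powr (2 + \<epsilon>) * (1 + (real N)^2 / real q)"
      by (simp add: G_def Q_def mult_ac)
  qed
qed


end
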